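(* Let $n\ge2$ and $\sigma>0$. Write eigenvectors of $\mathbf A_\sigma^{-1}\mathbf B$ as $\mathbf p=(p_1,\dots,p_n)$, normalized with $\|\mathbf p\|=1$. Then the following hold. (i) The matrix $\mathbf A_\sigma^{-1}\mathbf B$ has $n-1$ linearly independent eigenvectors associated with positive eigenvalues. (ii) Exactly $\lfloor n/2\rfloor$ of these eigenvectors satisfy $p_l=p_{n-l}$ for $l=1,\dots,n-1$ and $p_n\neq0$. (iii) The remaining $\lfloor (n-1)/2\rfloor$ of these eigenvectors have entries $p_l=b\sin(l\theta_j)$ for $l=1,\dots,n$. Here $\theta_j=2\pi m_j/n$ for some $m_j\in\mathbb Z$, and $b\in\mathbb R\setminus\{0\}$ is a normalizing constant. In particular these eigenvectors satisfy $p_l=-p_{n-l}$ for $l=1,\dots,n-1$ and $p_n=0$, and they do not depend on $\sigma$. (iv) The eigenvector $\mathbf p_n$ associated with the unique negative eigenvalue satisfies $p_{l}=p_{n-l}$ for $l=1,\dots,n-1$ and $p_n\neq 0$.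
   Context: Let $\mathbf L\in\mathbb R^{n\times n}$ be the periodic discrete one-dimensional Laplacian, i.e. $(\mathbf L\mathbf x)_i=x_{i-1}-2x_i+x_{i+1}$ with indices taken modulo $n$. For $\sigma\ge 0$ set $\mathbf A_\sigma=\mathbf I-\sigma\mathbf L$, which is symmetric positive definite. Let $\mathbf B=\mathrm{diag}(1,\dots,1,-1)\in\mathbb R^{n\times n}$. It is known that $\mathbf A_\sigma^{-1}\mathbf B$ is diagonalizable with real eigenvalues, exactly one of which is negative and $n-1$ of which are positive. *)

theory Defs
  imports "Jordan_Normal_Form.Gauss_Jordan_Elimination" "Jordan_Normal_Form.Char_Poly"
begin

text \<open>Periodic discrete 1D Laplacian (0-based indices mod n):
  (L x)_i = x_(i-1) - 2 x_i + x_(i+1).  Entries are added, so for n = 2 the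
  off-diagonal entry is 2, as the formula demands.\<close>
definition lap :: "nat \<Rightarrow> real mat" where
  "lap n = mat n n (\<lambda>(i,j).
      (if j = (i + 1) mod n then 1 else 0) + (if j = (i + n - 1) mod n then 1 else 0)
      - (if i = j then 2 else 0))"

definition Amat :: "nat \<Rightarrow> real \<Rightarrow> real mat" where
  "Amat n \<sigma> = 1\<^sub>m n - \<sigma> \<cdot>\<^sub>m lap n"

definition Bmat :: "nat \<Rightarrow> real mat" where
  "Bmat n = mat n n (\<lambda>(i,j). if i = j then (if i = n - 1 then -1 else 1) else 0)"

definition Mmat :: "nat \<Rightarrow> real \<Rightarrow> real mat" where
  "Mmat n \<sigma> = the (mat_inverse (Amat n \<sigma>)) * Bmat n"

text \<open>1-based component access: pc p l = p_l for l in 1..n.\<close>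
definition pc :: "real vec \<Rightarrow> nat \<Rightarrow> real" where
  "pc p l = p $ (l - 1)"

definition vnorm :: "real vec \<Rightarrow> real" where
  "vnorm p = sqrt (\<Sum>i<dim_vec p. (p $ i)^2)"

definition sym_vec :: "nat \<Rightarrow> real vec \<Rightarrow> bool" where
  "sym_vec n p = (\<forall>l\<in>{1..n-1}. pc p l = pc p (n - l))"

definition antisym_vec :: "nat \<Rightarrow> real vec \<Rightarrow> bool" where
  "antisym_vec n p = (\<forall>l\<in>{1..n-1}. pc p l = - pc p (n - l))"

definition lin_indep_vecs :: "nat \<Rightarrow> real vec list \<Rightarrow> bool" where
  "lin_indep_vecs n ps = (\<forall>c :: nat \<Rightarrow> real.
      (\<forall>i<n. (\<Sum>j<length ps. c j * (ps ! j) $ i) = 0) \<longrightarrow> (\<forall>j<length ps. c j = 0))"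

end

theory Submission
  imports Defs
begin

definition nxt :: "nat \<Rightarrow> nat \<Rightarrow> nat" where "nxt n i = (if i = n - 1 then 0 else i + 1)"
definition prv :: "nat \<Rightarrow> nat \<Rightarrow> nat" where "prv n i = (if i = 0 then n - 1 else i - 1)"

definition Af :: "nat \<Rightarrow> real \<Rightarrow> (nat \<Rightarrow> real) \<Rightarrow> nat \<Rightarrow> real" where
  "Af n \<sigma> f i = f i - \<sigma> * (f (prv n i) - 2 * f i + f (nxt n i))"
definition Bf :: "nat \<Rightarrow> (nat \<Rightarrow> real) \<Rightarrow> nat \<Rightarrow> real" where
  "Bf n f i = (if i = n - 1 then - f i else f i)"
definition ipf :: "nat \<Rightarrow> (nat \<Rightarrow> real) \<Rightarrow> (nat \<Rightarrow> real) \<Rightarrow> real" where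
  "ipf n f g = (\<Sum>i<n. f i * g i)"

lemma nxt_mod: "i < n \<Longrightarrow> (i + 1) mod n = nxt n i"
  unfolding nxt_def by (cases "i = n - 1") auto

lemma prv_mod: "i < n \<Longrightarrow> (i + n - 1) mod n = prv n i"
proof (cases "i = 0")
  case True
  assume "i < n" then show ?thesis using True by (simp add: prv_def)
next
  case False
  assume "i < n"
  then have "i + n - 1 = (i - 1) + n" using False by simp
  then have "(i + n - 1) mod n = (i - 1) mod n" by simp
  then show ?thesis using False \<open>i < n\<close> by (simp add: prv_def)
qed

lemma nxt_lt: "i < n \<Longrightarrow> nxt n i < n" and prv_lt: "i < n \<Longrightarrow> prv n i < n"
  by (auto simp: nxt_def prv_def)

lemma sum_nxt: "(\<Sum>i<n. f (nxt n i)) = (\<Sum>i<n. f i)"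
  by (rule sum.reindex_bij_witness[where i="prv n" and j="nxt n"]) (auto simp: nxt_def prv_def)

lemma sum_prv: "(\<Sum>i<n. f (prv n i)) = (\<Sum>i<n. f i)"
  by (rule sum.reindex_bij_witness[where i="nxt n" and j="prv n"]) (auto simp: nxt_def prv_def)

lemma prv_nxt: "i < n \<Longrightarrow> prv n (nxt n i) = i" and nxt_prv: "i < n \<Longrightarrow> nxt n (prv n i) = i"
  by (auto simp: nxt_def prv_def)

lemma Amat_carrier: "Amat n \<sigma> \<in> carrier_mat n n"
  unfolding Amat_def lap_def by (intro minus_carrier_mat) auto

lemma Amat_mult: assumes p: "p \<in> carrier_vec n" and i: "i < n"
  shows "(Amat n \<sigma> *\<^sub>v p) $ i = Af n \<sigma> (($) p) i"
proof -
  have "(Amat n \<sigma> *\<^sub>v p) $ i = (\<Sum>j<n. Amat n \<sigma> $$ (i, j) * p $ j)"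
    using p i Amat_carrier[of n \<sigma>] by (simp add: scalar_prod_def lessThan_atLeast0)
  also have "\<dots> = (\<Sum>j<n. (if j = i then p $ j else 0) - \<sigma> * ((if j = nxt n i then p $ j else 0)
      + (if j = prv n i then p $ j else 0) - (if j = i then 2 * p $ j else 0)))"
    using nxt_mod[OF i] prv_mod[OF i] by (intro sum.cong) (auto simp: Amat_def lap_def i algebra_simps)
  also have "\<dots> = Af n \<sigma> (($) p) i"
    using i nxt_lt[OF i] prv_lt[OF i]
    by (simp add: Af_def sum_subtractf sum.distrib sum_distrib_left[symmetric] algebra_simps)
  finally show ?thesis .
qed

lemma Bmat_carrier: "Bmat n \<in> carrier_mat n n"
  by (simp add: Bmat_def)

lemma Bmat_mult: assumes p: "p \<in> carrier_vec n" and i: "i < n"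
  shows "(Bmat n *\<^sub>v p) $ i = Bf n (($) p) i"
proof -
  have "(Bmat n *\<^sub>v p) $ i = (\<Sum>j<n. Bmat n $$ (i, j) * p $ j)"
    using p i Bmat_carrier[of n] by (simp add: scalar_prod_def lessThan_atLeast0)
  also have "\<dots> = (\<Sum>j<n. if j = i then (if i = n - 1 then - p $ j else p $ j) else 0)"
    by (rule sum.cong, simp, auto simp: Bmat_def i)
  also have "\<dots> = Bf n (($) p) i"
    using i by (simp add: Bf_def)
  finally show ?thesis .
qed

lemma sum_lin: fixes x y z w :: "nat \<Rightarrow> real" shows "(\<Sum>i<n. (x i - s * (y i - 2 * x i + z i)) * w i) =
   (\<Sum>i<n. x i * w i) - s * ((\<Sum>i<n. y i * w i) - 2 * (\<Sum>i<n. x i * w i) + (\<Sum>i<n. z i * w i))"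
proof -
  have "(\<Sum>i<n. (x i - s * (y i - 2 * x i + z i)) * w i) =
     (\<Sum>i<n. x i * w i - s * (y i * w i) + (2 * s) * (x i * w i) - s * (z i * w i))"
    by (rule sum.cong) (simp_all add: algebra_simps)
  also have "\<dots> = (\<Sum>i<n. x i * w i) - s * (\<Sum>i<n. y i * w i) + (2 * s) * (\<Sum>i<n. x i * w i) - s * (\<Sum>i<n. z i * w i)"
    by (simp only: sum.distrib sum_subtractf sum_distrib_left)
  finally show ?thesis by (simp add: algebra_simps)
qed

lemma sum_lin': fixes x y z w :: "nat \<Rightarrow> real" shows "(\<Sum>i<n. w i * (x i - s * (y i - 2 * x i + z i))) =
   (\<Sum>i<n. x i * w i) - s * ((\<Sum>i<n. y i * w i) - 2 * (\<Sum>i<n. x i * w i) + (\<Sum>i<n. z i * w i))"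
proof -
  have "(\<Sum>i<n. w i * (x i - s * (y i - 2 * x i + z i))) = (\<Sum>i<n. (x i - s * (y i - 2 * x i + z i)) * w i)"
    by (rule sum.cong) (simp_all add: mult.commute)
  then show ?thesis using sum_lin[of x s y z w n] by simp
qed

lemma ip_sym: "ipf n (Af n \<sigma> f) g = ipf n f (Af n \<sigma> g)"
proof -
  have e1: "(\<Sum>i<n. f (prv n i) * g i) = (\<Sum>i<n. g (nxt n i) * f i)"
  proof -
    have "(\<Sum>i<n. f (prv n i) * g i) = (\<Sum>i<n. f (prv n (nxt n i)) * g (nxt n i))"
      by (rule sum_nxt[symmetric])
    also have "\<dots> = (\<Sum>i<n. g (nxt n i) * f i)" by (rule sum.cong) (auto simp: prv_nxt)
    finally show ?thesis .
  qed
  have e2: "(\<Sum>i<n. f (nxt n i) * g i) = (\<Sum>i<n. g (prv n i) * f i)"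
  proof -
    have "(\<Sum>i<n. f (nxt n i) * g i) = (\<Sum>i<n. f (nxt n (prv n i)) * g (prv n i))"
      by (rule sum_prv[symmetric])
    also have "\<dots> = (\<Sum>i<n. g (prv n i) * f i)" by (rule sum.cong) (auto simp: nxt_prv)
    finally show ?thesis .
  qed
  have e3: "(\<Sum>i<n. f i * g i) = (\<Sum>i<n. g i * f i)" by (simp add: mult.commute)
  show ?thesis unfolding ipf_def Af_def sum_lin sum_lin' e1 e2 e3 by simp
qed

lemma ip_pos_eq: "ipf n f (Af n \<sigma> f) = ipf n f f + \<sigma> * (\<Sum>i<n. (f (nxt n i) - f i)^2)"
proof -
  have e1: "(\<Sum>i<n. f (prv n i) * f i) = (\<Sum>i<n. f (nxt n i) * f i)"
  proof -
    have "(\<Sum>i<n. f (prv n i) * f i) = (\<Sum>i<n. f (prv n (nxt n i)) * f (nxt n i))"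
      by (rule sum_nxt[symmetric])
    also have "\<dots> = (\<Sum>i<n. f (nxt n i) * f i)" by (rule sum.cong) (auto simp: prv_nxt mult.commute)
    finally show ?thesis .
  qed
  have e2: "(\<Sum>i<n. f (nxt n i) * f (nxt n i)) = (\<Sum>i<n. f i * f i)"
    by (rule sum_nxt)
  have e4: "(\<Sum>i<n. (f (nxt n i) - f i)^2) = (\<Sum>i<n. f (nxt n i) * f (nxt n i)) - 2 * (\<Sum>i<n. f (nxt n i) * f i) + (\<Sum>i<n. f i * f i)"
  proof -
    have "(\<Sum>i<n. (f (nxt n i) - f i)^2) = (\<Sum>i<n. f (nxt n i) * f (nxt n i) - 2 * (f (nxt n i) * f i) + f i * f i)"
      by (rule sum.cong) (simp_all add: power2_eq_square algebra_simps)
    also have "\<dots> = (\<Sum>i<n. f (nxt n i) * f (nxt n i)) - 2 * (\<Sum>i<n. f (nxt n i) * f i) + (\<Sum>i<n. f i * f i)"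
      by (simp only: sum.distrib sum_subtractf sum_distrib_left)
    finally show ?thesis .
  qed
  have L: "ipf n f (Af n \<sigma> f) = (\<Sum>i<n. f i * f i) - \<sigma> * ((\<Sum>i<n. f (nxt n i) * f i) - 2 * (\<Sum>i<n. f i * f i) + (\<Sum>i<n. f (nxt n i) * f i))"
    unfolding ipf_def Af_def sum_lin' e1 ..
  have R: "ipf n f f + \<sigma> * (\<Sum>i<n. (f (nxt n i) - f i)^2) = (\<Sum>i<n. f i * f i) + \<sigma> * ((\<Sum>i<n. f i * f i) - 2 * (\<Sum>i<n. f (nxt n i) * f i) + (\<Sum>i<n. f i * f i))"
    unfolding ipf_def e4 e2 ..
  show ?thesis unfolding L R by (simp add: algebra_simps)
qed

lemma ip_self_ge: "ipf n f f \<ge> 0"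
  unfolding ipf_def by (intro sum_nonneg) auto

lemma ip_self_pos: "i < n \<Longrightarrow> f i \<noteq> 0 \<Longrightarrow> ipf n f f > 0"
  unfolding ipf_def by (intro sum_pos2[of _ i]) (auto simp: zero_less_mult_iff linorder_neq_iff)

lemma ip_A_ge: "\<sigma> \<ge> 0 \<Longrightarrow> ipf n f (Af n \<sigma> f) \<ge> ipf n f f"
  unfolding ip_pos_eq by (intro add_increasing2 mult_nonneg_nonneg sum_nonneg) auto

lemma ip_A_pos: "\<sigma> \<ge> 0 \<Longrightarrow> i < n \<Longrightarrow> f i \<noteq> 0 \<Longrightarrow> ipf n f (Af n \<sigma> f) > 0"
  using ip_A_ge[of \<sigma> n f] ip_self_pos[of i n f] by linarith

lemma A_inj: assumes s: "\<sigma> \<ge> 0" and v: "v \<in> carrier_vec n" and z: "Amat n \<sigma> *\<^sub>v v = 0\<^sub>v n"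
  shows "v = 0\<^sub>v n"
proof (rule ccontr)
  assume "v \<noteq> 0\<^sub>v n"
  then obtain i where i: "i < n" "v $ i \<noteq> 0" using v by (metis eq_vecI carrier_vecD index_zero_vec)
  have "\<forall>j<n. Af n \<sigma> (($) v) j = 0" using Amat_mult[OF v] z by (metis index_zero_vec(1))
  then have "ipf n (($) v) (Af n \<sigma> (($) v)) = 0" unfolding ipf_def by simp
  with ip_A_pos[OF s i(1), of "($) v"] i(2) show False by simp
qed

lemma A_inverse: assumes s: "\<sigma> \<ge> 0"
  obtains Ai where "Ai \<in> carrier_mat n n" "Amat n \<sigma> * Ai = 1\<^sub>m n" "Ai * Amat n \<sigma> = 1\<^sub>m n"
    "mat_inverse (Amat n \<sigma>) = Some Ai"
proof -
  have "det (Amat n \<sigma>) \<noteq> 0"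
    using det_0_iff_vec_prod_zero[OF Amat_carrier] A_inj[OF s] by blast
  from det_non_zero_imp_unit[OF Amat_carrier this]
  have "Amat n \<sigma> \<in> Units (ring_mat TYPE(real) n n)" .
  then have "mat_inverse (Amat n \<sigma>) \<noteq> None" using mat_inverse(1)[OF Amat_carrier[of n \<sigma>], of n] by blast
  then obtain Ai where Ai: "mat_inverse (Amat n \<sigma>) = Some Ai" by blast
  from mat_inverse(2)[OF Amat_carrier Ai] Ai show ?thesis using that by blast
qed

lemma eig_iff: assumes s: "\<sigma> \<ge> 0"
  shows "eigenvector (Mmat n \<sigma>) p k \<longleftrightarrow> p \<in> carrier_vec n \<and> p \<noteq> 0\<^sub>v n \<and>
     (\<forall>i<n. Bf n (($) p) i = k * Af n \<sigma> (($) p) i)"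
proof -
  obtain Ai where Ai: "Ai \<in> carrier_mat n n" "Amat n \<sigma> * Ai = 1\<^sub>m n" "Ai * Amat n \<sigma> = 1\<^sub>m n"
    "mat_inverse (Amat n \<sigma>) = Some Ai" using A_inverse[OF s] by blast
  have M: "Mmat n \<sigma> = Ai * Bmat n" unfolding Mmat_def using Ai by simp
  have Mc: "Mmat n \<sigma> \<in> carrier_mat n n" unfolding M using Ai Bmat_carrier by auto
  have key: "Mmat n \<sigma> *\<^sub>v p = k \<cdot>\<^sub>v p \<longleftrightarrow> Bmat n *\<^sub>v p = k \<cdot>\<^sub>v (Amat n \<sigma> *\<^sub>v p)"
    if p: "p \<in> carrier_vec n" for p
  proof
    assume h: "Mmat n \<sigma> *\<^sub>v p = k \<cdot>\<^sub>v p"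
    have Bp: "Bmat n *\<^sub>v p \<in> carrier_vec n" by (metis Bmat_carrier mult_mat_vec_carrier p)
    have "Bmat n *\<^sub>v p = (Amat n \<sigma> * Ai) *\<^sub>v (Bmat n *\<^sub>v p)"
      using Ai(2) Bp by simp
    also have "\<dots> = Amat n \<sigma> *\<^sub>v (Ai *\<^sub>v (Bmat n *\<^sub>v p))"
      by (metis assoc_mult_mat_vec Ai(1) Bp Amat_carrier)
    also have "\<dots> = Amat n \<sigma> *\<^sub>v (Mmat n \<sigma> *\<^sub>v p)"
      unfolding M using Ai p Bmat_carrier by (simp add: assoc_mult_mat_vec[of _ n n _ n])
    also have "\<dots> = k \<cdot>\<^sub>v (Amat n \<sigma> *\<^sub>v p)" unfolding h
      using p Amat_carrier by (metis mult_mat_vec)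
    finally show "Bmat n *\<^sub>v p = k \<cdot>\<^sub>v (Amat n \<sigma> *\<^sub>v p)" .
  next
    assume h: "Bmat n *\<^sub>v p = k \<cdot>\<^sub>v (Amat n \<sigma> *\<^sub>v p)"
    have "Mmat n \<sigma> *\<^sub>v p = Ai *\<^sub>v (Bmat n *\<^sub>v p)"
      unfolding M using Ai p Bmat_carrier by (simp add: assoc_mult_mat_vec[of _ n n _ n])
    also have "\<dots> = k \<cdot>\<^sub>v (Ai *\<^sub>v (Amat n \<sigma> *\<^sub>v p))" unfolding h
      by (metis mult_mat_vec Ai(1) p Amat_carrier mult_mat_vec_carrier)
    also have "\<dots> = k \<cdot>\<^sub>v ((Ai * Amat n \<sigma>) *\<^sub>v p)"
      by (metis assoc_mult_mat_vec Ai(1) p Amat_carrier)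
    also have "\<dots> = k \<cdot>\<^sub>v p" using Ai p by simp
    finally show "Mmat n \<sigma> *\<^sub>v p = k \<cdot>\<^sub>v p" .
  qed
  have key2: "Bmat n *\<^sub>v p = k \<cdot>\<^sub>v (Amat n \<sigma> *\<^sub>v p) \<longleftrightarrow> (\<forall>i<n. Bf n (($) p) i = k * Af n \<sigma> (($) p) i)"
    if p: "p \<in> carrier_vec n" for p
  proof
    assume "Bmat n *\<^sub>v p = k \<cdot>\<^sub>v (Amat n \<sigma> *\<^sub>v p)"
    then show "\<forall>i<n. Bf n (($) p) i = k * Af n \<sigma> (($) p) i"
      using p Amat_carrier Bmat_carrier Amat_mult[OF p] Bmat_mult[OF p]
      by (metis carrier_matD(1) dim_mult_mat_vec index_smult_vec(1))
  next
    assume h: "\<forall>i<n. Bf n (($) p) i = k * Af n \<sigma> (($) p) i"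
    show "Bmat n *\<^sub>v p = k \<cdot>\<^sub>v (Amat n \<sigma> *\<^sub>v p)"
    proof (rule eq_vecI)
      fix i assume i: "i < dim_vec (k \<cdot>\<^sub>v (Amat n \<sigma> *\<^sub>v p))"
      then have i': "i < n" using Amat_carrier[of n \<sigma>] by simp
      have "(Bmat n *\<^sub>v p) $ i = Bf n (($) p) i" by (rule Bmat_mult[OF p i'])
      also have "\<dots> = k * Af n \<sigma> (($) p) i" using h i' by simp
      also have "\<dots> = k * (Amat n \<sigma> *\<^sub>v p) $ i" using Amat_mult[OF p i'] by simp
      also have "\<dots> = (k \<cdot>\<^sub>v (Amat n \<sigma> *\<^sub>v p)) $ i" using i by simp
      finally show "(Bmat n *\<^sub>v p) $ i = (k \<cdot>\<^sub>v (Amat n \<sigma> *\<^sub>v p)) $ i" .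
    next
      show "dim_vec (Bmat n *\<^sub>v p) = dim_vec (k \<cdot>\<^sub>v (Amat n \<sigma> *\<^sub>v p))"
        using Amat_carrier[of n \<sigma>] Bmat_carrier[of n] by simp
    qed
  qed
  show ?thesis unfolding eigenvector_def using Mc key key2 by auto
qed


lemma Af_cong: "i < n \<Longrightarrow> (\<And>j. j < n \<Longrightarrow> f j = g j) \<Longrightarrow> Af n \<sigma> f i = Af n \<sigma> g i"
  unfolding Af_def using prv_lt[of i n] nxt_lt[of i n] by simp

lemma Bf_cong: "i < n \<Longrightarrow> (\<And>j. j < n \<Longrightarrow> f j = g j) \<Longrightarrow> Bf n f i = Bf n g i"
  unfolding Bf_def by simp

lemma Af_smult: "Af n \<sigma> (\<lambda>j. c * f j) i = c * Af n \<sigma> f i"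
  unfolding Af_def by (simp add: algebra_simps)

lemma Bf_smult: "Bf n (\<lambda>j. c * f j) i = c * Bf n f i"
  unfolding Bf_def by simp

lemma Af_diff: "Af n \<sigma> (\<lambda>j. f j - g j) i = Af n \<sigma> f i - Af n \<sigma> g i"
  unfolding Af_def by (simp add: algebra_simps)

lemma Bf_diff: "Bf n (\<lambda>j. f j - g j) i = Bf n f i - Bf n g i"
  unfolding Bf_def by simp

lemma eig_vec_fun: assumes s: "\<sigma> \<ge> 0" and h: "\<forall>i<n. Bf n f i = k * Af n \<sigma> f i"
  and nz: "i0 < n" "f i0 \<noteq> 0"
  shows "eigenvector (Mmat n \<sigma>) (vec n f) k"
proof -
  have c: "\<And>j. j < n \<Longrightarrow> vec n f $ j = f j" by simp
  have "vec n f \<noteq> 0\<^sub>v n" using nz by (metis index_vec index_zero_vec(1))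
  moreover have "\<forall>i<n. Bf n (($) (vec n f)) i = k * Af n \<sigma> (($) (vec n f)) i"
    using h Af_cong[of _ n "($) (vec n f)" f \<sigma>] Bf_cong[of _ n "($) (vec n f)" f] c by simp
  ultimately show ?thesis unfolding eig_iff[OF s] by simp
qed

lemma ipf_B_sym: "ipf n (Bf n f) g = ipf n f (Bf n g)"
  unfolding ipf_def Bf_def by (rule sum.cong) auto

lemma A_orth: assumes s: "\<sigma> \<ge> 0"
  and hf: "\<forall>i<n. Bf n f i = k * Af n \<sigma> f i" and hg: "\<forall>i<n. Bf n g i = l * Af n \<sigma> g i"
  and kl: "k \<noteq> l"
  shows "ipf n (Af n \<sigma> f) g = 0"
proof -
  have "k * ipf n (Af n \<sigma> f) g = ipf n (Bf n f) g"
    unfolding ipf_def sum_distrib_left using hf by (intro sum.cong) auto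
  also have "\<dots> = ipf n f (Bf n g)" by (rule ipf_B_sym)
  also have "\<dots> = l * ipf n f (Af n \<sigma> g)"
    unfolding ipf_def sum_distrib_left using hg by (intro sum.cong) auto
  also have "\<dots> = l * ipf n (Af n \<sigma> f) g" by (simp add: ip_sym)
  finally have "(k - l) * ipf n (Af n \<sigma> f) g = 0" by (simp add: algebra_simps)
  with kl show ?thesis by simp
qed

lemma lin_indep_eig: assumes s: "\<sigma> \<ge> 0"
  and hc: "\<forall>j<length ps. ps ! j \<in> carrier_vec n"
  and hz: "\<forall>j<length ps. \<exists>i<n. ps ! j $ i \<noteq> 0"
  and he: "\<forall>j<length ps. \<forall>i<n. Bf n (($) (ps ! j)) i = kk j * Af n \<sigma> (($) (ps ! j)) i"
  and hd: "\<forall>j j'. j < length ps \<and> j' < length ps \<and> j \<noteq> j' \<longrightarrow> kk j \<noteq> kk j'"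
  shows "lin_indep_vecs n ps"
  unfolding lin_indep_vecs_def
proof (intro allI impI)
  fix c :: "nat \<Rightarrow> real" and t
  assume H: "\<forall>i<n. (\<Sum>j<length ps. c j * ps ! j $ i) = 0" and t: "t < length ps"
  define P where "P j = ($) (ps ! j)" for j
  define X where "X j = ipf n (Af n \<sigma> (P t)) (P j)" for j
  have X0: "X j = 0" if "j < length ps" "j \<noteq> t" for j
    unfolding X_def P_def
    by (rule A_orth[OF s, where k="kk t" and l="kk j"]) (use he t that hd in auto)
  have "0 = (\<Sum>i<n. Af n \<sigma> (P t) i * (\<Sum>j<length ps. c j * ps ! j $ i))"
    using H by simp
  also have "\<dots> = (\<Sum>i<n. \<Sum>j<length ps. c j * (Af n \<sigma> (P t) i * P j i))"
    unfolding sum_distrib_left P_def by (intro sum.cong) (auto simp: mult_ac)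
  also have "\<dots> = (\<Sum>j<length ps. c j * X j)"
    unfolding X_def ipf_def sum_distrib_left by (rule sum.swap)
  also have "\<dots> = (\<Sum>j<length ps. if j = t then c t * X t else 0)"
    by (intro sum.cong) (auto simp: X0)
  also have "\<dots> = c t * X t" using t by simp
  finally have ct: "c t * X t = 0" by simp
  obtain i where i: "i < n" "ps ! t $ i \<noteq> 0" using hz t by blast
  have "X t = ipf n (P t) (Af n \<sigma> (P t))" unfolding X_def by (rule ip_sym)
  also have "\<dots> > 0" by (rule ip_A_pos[OF s i(1)]) (use i P_def in simp)
  finally show "c t = 0" using ct by simp
qed

definition rf :: "nat \<Rightarrow> nat \<Rightarrow> nat" where "rf n i = (if i = n - 1 then n - 1 else n - 2 - i)"

lemma rf_props: assumes "n \<ge> 2" "i < n"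
  shows "rf n i < n" "prv n (rf n i) = rf n (nxt n i)" "nxt n (rf n i) = rf n (prv n i)"
    "rf n i = n - 1 \<longleftrightarrow> i = n - 1"
  using assms by (auto simp: rf_def prv_def nxt_def)

lemma Af_rf: assumes "n \<ge> 2" "i < n"
  shows "Af n \<sigma> (\<lambda>j. f (rf n j)) i = Af n \<sigma> f (rf n i)"
  unfolding Af_def using rf_props[OF assms] by simp

lemma Bf_rf: assumes "n \<ge> 2" "i < n"
  shows "Bf n (\<lambda>j. f (rf n j)) i = Bf n f (rf n i)"
  unfolding Bf_def using rf_props[OF assms] by simp

lemma neg_zero: assumes s: "\<sigma> \<ge> 0" and k: "k < 0" and h: "\<forall>i<n. g i = k * Af n \<sigma> g i"
  shows "\<forall>i<n. g i = 0"
proof (rule ccontr)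
  assume "\<not> (\<forall>i<n. g i = 0)"
  then obtain i where i: "i < n" "g i \<noteq> 0" by blast
  have "ipf n g g = k * ipf n g (Af n \<sigma> g)"
    unfolding ipf_def sum_distrib_left using h by (intro sum.cong) (auto simp: mult_ac)
  moreover have "ipf n g (Af n \<sigma> g) > 0" using ip_A_pos[OF s i(1), of g] i(2) by simp
  moreover have "ipf n g g > 0" using ip_self_pos[of i n g] i by simp
  ultimately show False using mult_neg_pos[OF k, of "ipf n g (Af n \<sigma> g)"] by linarith
qed

lemma neg_eig: assumes n: "n \<ge> 2" and s: "\<sigma> \<ge> 0" and k: "k < 0"
  and e: "eigenvector (Mmat n \<sigma>) p k"
  shows "\<forall>i<n. p $ i = p $ (rf n i)" "p $ (n - 1) \<noteq> 0"
proof -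
  from e[unfolded eig_iff[OF s]] have p: "p \<in> carrier_vec n" "p \<noteq> 0\<^sub>v n"
    and h: "\<forall>i<n. Bf n (($) p) i = k * Af n \<sigma> (($) p) i" by auto
  define f where "f = ($) p"
  define g where "g i = f i - f (rf n i)" for i
  have "\<forall>i<n. g i = k * Af n \<sigma> g i"
  proof (intro allI impI)
    fix i assume i: "i < n"
    have ri: "rf n i < n" using rf_props[OF n i] by simp
    have g1: "g (n - 1) = 0" unfolding g_def rf_def by simp
    have "g i = Bf n g i" unfolding Bf_def using g1 by auto
    also have "\<dots> = Bf n f i - Bf n f (rf n i)"
      unfolding g_def Bf_diff Bf_rf[OF n i] ..
    also have "\<dots> = k * Af n \<sigma> f i - k * Af n \<sigma> f (rf n i)" using h i ri f_def by simp
    also have "\<dots> = k * Af n \<sigma> g i"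
      unfolding g_def Af_diff Af_rf[OF n i] by (simp add: algebra_simps)
    finally show "g i = k * Af n \<sigma> g i" .
  qed
  from neg_zero[OF s k this] show "\<forall>i<n. p $ i = p $ (rf n i)" unfolding g_def f_def by simp
  show "p $ (n - 1) \<noteq> 0"
  proof
    assume z: "p $ (n - 1) = 0"
    have "\<forall>i<n. f i = k * Af n \<sigma> f i"
    proof (intro allI impI)
      fix i assume i: "i < n"
      have "f i = Bf n f i" unfolding Bf_def using z f_def by auto
      then show "f i = k * Af n \<sigma> f i" using h i f_def by simp
    qed
    from neg_zero[OF s k this] have "\<forall>i<n. p $ i = 0" unfolding f_def .
    then have "p = 0\<^sub>v n" using p(1) by (intro eq_vecI) auto
    with p(2) show False ..
  qed
qed


lemma sin_cos_nth: assumes n: "n > 0"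
  shows "sin (real n * (2 * pi * real m / real n)) = 0" "cos (real n * (2 * pi * real m / real n)) = 1"
proof -
  have e: "real n * (2 * pi * real m / real n) = real (2 * m) * pi" using n by (simp add: field_simps)
  show "sin (real n * (2 * pi * real m / real n)) = 0" unfolding e by (rule sin_npi)
  show "cos (real n * (2 * pi * real m / real n)) = 1" unfolding e cos_npi by simp
qed

lemma sin_sum3: fixes a t :: real shows "sin (a - t) + sin (a + t) = 2 * cos t * sin a"
  by (simp add: sin_add sin_diff)

lemma cos_sum3: fixes a t :: real shows "cos (a - t) + cos (a + t) = 2 * cos t * cos a"
  by (simp add: cos_add cos_diff)

lemma sine_eig: fixes m :: nat and \<tau> :: real assumes n: "n \<ge> 2" and i: "i < n"
  defines "\<theta> \<equiv> 2 * pi * real m / real n"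
  defines "f \<equiv> (\<lambda>j. sin (real (j + 1) * \<theta>))"
  shows "Af n \<tau> f i = (1 + 2 * \<tau> - 2 * \<tau> * cos \<theta>) * f i" "Bf n f i = f i"
proof -
  have sn: "sin (real n * \<theta>) = 0" and cn: "cos (real n * \<theta>) = 1"
    using sin_cos_nth[of n m] n unfolding \<theta>_def by auto
  have fp: "f (prv n i) = sin (real (i + 1) * \<theta> - \<theta>)"
  proof (cases "i = 0")
    case True
    then have "prv n i = n - 1" by (simp add: prv_def)
    moreover have "real (n - 1 + 1) = real n" using n by simp
    ultimately show ?thesis using True sn unfolding f_def by simp
  next
    case False
    then have "prv n i = i - 1" by (simp add: prv_def)
    moreover have "real (i - 1 + 1) * \<theta> = real (i + 1) * \<theta> - \<theta>" using False by (simp add: algebra_simps of_nat_diff)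
    ultimately show ?thesis unfolding f_def by simp
  qed
  have fn: "f (nxt n i) = sin (real (i + 1) * \<theta> + \<theta>)"
  proof (cases "i = n - 1")
    case True
    then have "nxt n i = 0" by (simp add: nxt_def)
    moreover have r: "real (i + 1) = real n" using True n by (simp add: of_nat_diff)
    ultimately show ?thesis unfolding f_def r using sn cn by (simp add: sin_add)
  next
    case False
    then have "nxt n i = i + 1" by (simp add: nxt_def)
    then show ?thesis unfolding f_def by (simp add: algebra_simps)
  qed
  show "Af n \<tau> f i = (1 + 2 * \<tau> - 2 * \<tau> * cos \<theta>) * f i"
    unfolding Af_def fp fn
    using sin_sum3[of "real (i + 1) * \<theta>" \<theta>] unfolding f_def by (simp add: algebra_simps)
  have "f (n - 1) = 0" using sn n unfolding f_def by (simp add: of_nat_diff)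
  then show "Bf n f i = f i" unfolding Bf_def by simp
qed

lemma cos_eig: assumes n: "n \<ge> 2" and i: "i < n"
  and F: "\<sigma> * sin (real n / 2 * \<phi>) * sin \<phi> = cos (real n / 2 * \<phi>) * (1 + 2 * \<sigma> - 2 * \<sigma> * cos \<phi>)"
  defines "f \<equiv> (\<lambda>j. cos ((real (j + 1) - real n / 2) * \<phi>))"
  shows "Af n \<sigma> f i = (1 + 2 * \<sigma> - 2 * \<sigma> * cos \<phi>) * Bf n f i"
proof (cases "i = n - 1")
  case False
  have fp: "f (prv n i) = cos ((real (i + 1) - real n / 2) * \<phi> - \<phi>)"
  proof (cases "i = 0")
    case True
    then have "prv n i = n - 1" by (simp add: prv_def)
    moreover have "real (n - 1 + 1) = real n" using n by simp
    moreover have "(real (i + 1) - real n / 2) * \<phi> - \<phi> = - ((real n - real n / 2) * \<phi>)"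
      using True by (simp add: algebra_simps)
    ultimately show ?thesis unfolding f_def by (simp only: cos_minus)
  next
    case False
    then have "prv n i = i - 1" by (simp add: prv_def)
    moreover have "(real (i - 1 + 1) - real n / 2) * \<phi> = (real (i + 1) - real n / 2) * \<phi> - \<phi>"
      using False by (simp add: algebra_simps of_nat_diff)
    ultimately show ?thesis unfolding f_def by simp
  qed
  have fn: "f (nxt n i) = cos ((real (i + 1) - real n / 2) * \<phi> + \<phi>)"
  proof -
    have "nxt n i = i + 1" using False by (simp add: nxt_def)
    then show ?thesis unfolding f_def by (simp add: algebra_simps)
  qed
  show ?thesis
    unfolding Af_def Bf_def fp fn using False
    using cos_sum3[of "(real (i + 1) - real n / 2) * \<phi>" \<phi>] unfolding f_def by (simp add: algebra_simps)
next
  case True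
  define C where "C = cos (real n / 2 * \<phi>)"
  define S where "S = sin (real n / 2 * \<phi>)"
  have f1: "f i = C" unfolding f_def C_def True using n by (simp add: of_nat_diff algebra_simps)
  have "prv n i = n - 2" using True n by (simp add: prv_def)
  then have fp: "f (prv n i) = cos (real n / 2 * \<phi> - \<phi>)"
    unfolding f_def using n by (simp add: of_nat_diff algebra_simps)
  have "nxt n i = 0" using True by (simp add: nxt_def)
  then have fn: "f (nxt n i) = cos (real n / 2 * \<phi> - \<phi>)"
  proof -
    assume "nxt n i = 0"
    then have "f (nxt n i) = cos (- (real n / 2 * \<phi> - \<phi>))" unfolding f_def by (simp add: algebra_simps)
    then show ?thesis by (simp only: cos_minus)
  qed
  have cd: "cos (real n / 2 * \<phi> - \<phi>) = C * cos \<phi> + S * sin \<phi>" unfolding C_def S_def by (simp add: cos_diff)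
  have F': "\<sigma> * S * sin \<phi> = C * (1 + 2 * \<sigma> - 2 * \<sigma> * cos \<phi>)" using F unfolding C_def S_def .
  show ?thesis unfolding Af_def Bf_def fp fn f1 cd using True F' by (simp add: algebra_simps)
qed

lemma ivt0: fixes F :: "real \<Rightarrow> real"
  assumes ab: "a < b" and c: "\<forall>x. isCont F x" and s: "F a * F b < 0"
  shows "\<exists>x. a < x \<and> x < b \<and> F x = 0"
proof (cases "F a < 0")
  case True
  then have "F b > 0" using s by (simp add: mult_less_0_iff)
  then obtain x where "a \<le> x" "x \<le> b" "F x = 0" using IVT[of F a 0 b] True ab c by force
  then show ?thesis using True \<open>F b > 0\<close> by (metis less_eq_real_def less_irrefl)
next
  case False
  then have "F a > 0" "F b < 0" using s by (auto simp: mult_less_0_iff)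
  then obtain x where "a \<le> x" "x \<le> b" "F x = 0" using IVT2[of F b 0 a] ab c by force
  then show ?thesis using \<open>F a > 0\<close> \<open>F b < 0\<close> by (metis less_eq_real_def less_irrefl)
qed

definition Fr :: "nat \<Rightarrow> real \<Rightarrow> real \<Rightarrow> real" where
  "Fr n \<sigma> x = \<sigma> * sin (real n / 2 * x) * sin x - cos (real n / 2 * x) * (1 + 2 * \<sigma> - 2 * \<sigma> * cos x)"

lemma Fr_grid: assumes n: "n > 0" and s: "\<sigma> \<ge> 0"
  shows "Fr n \<sigma> (2 * pi * real j / real n) = - ((-1) ^ j * (1 + 2 * \<sigma> - 2 * \<sigma> * cos (2 * pi * real j / real n)))"
proof -
  have e: "real n / 2 * (2 * pi * real j / real n) = real j * pi" using n by (simp add: field_simps)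
  show ?thesis unfolding Fr_def e sin_npi cos_npi by simp
qed

lemma mu_pos: fixes \<sigma> x :: real shows "\<sigma> \<ge> 0 \<Longrightarrow> 1 + 2 * \<sigma> - 2 * \<sigma> * cos x \<ge> 1"
proof -
  assume "\<sigma> \<ge> 0"
  then have "\<sigma> * cos x \<le> \<sigma>" using cos_le_one[of x] by (simp add: mult_left_le)
  then show ?thesis by simp
qed

lemma roots_exist: assumes n: "n \<ge> 2" and s: "\<sigma> \<ge> 0"
  shows "\<exists>\<phi>. \<forall>j\<in>{1..n div 2}. 2 * pi * real (j - 1) / real n < \<phi> j \<and> \<phi> j < 2 * pi * real j / real n
     \<and> Fr n \<sigma> (\<phi> j) = 0"
proof -
  have "\<forall>j. \<exists>x. j \<in> {1..n div 2} \<longrightarrow> 2 * pi * real (j - 1) / real n < x \<and> x < 2 * pi * real j / real n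
     \<and> Fr n \<sigma> x = 0"
  proof
    fix j
    show "\<exists>x. j \<in> {1..n div 2} \<longrightarrow> 2 * pi * real (j - 1) / real n < x \<and> x < 2 * pi * real j / real n
     \<and> Fr n \<sigma> x = 0"
    proof (cases "j \<in> {1..n div 2}")
      case False then show ?thesis by blast
    next
      case True
      then have j: "j \<ge> 1" by simp
      have n0: "n > 0" using n by simp
      have ab: "2 * pi * real (j - 1) / real n < 2 * pi * real j / real n"
        using j n0 by (simp add: divide_strict_right_mono of_nat_diff)
      have c: "\<forall>x. isCont (Fr n \<sigma>) x" unfolding Fr_def by (intro allI continuous_intros)
      define m1 where "m1 = 1 + 2 * \<sigma> - 2 * \<sigma> * cos (2 * pi * real (j - 1) / real n)"
      define m2 where "m2 = 1 + 2 * \<sigma> - 2 * \<sigma> * cos (2 * pi * real j / real n)"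
      have m1: "m1 > 0" and m2: "m2 > 0" using mu_pos[OF s] unfolding m1_def m2_def
        by (smt (verit))+
      have pj: "(-1::real) ^ j = - ((-1) ^ (j - 1))" using j
        by (metis Suc_diff_le diff_Suc_1 mult_minus1 power_Suc)
      have "Fr n \<sigma> (2 * pi * real (j - 1) / real n) * Fr n \<sigma> (2 * pi * real j / real n)
          = - (((-1) ^ (j - 1)) ^ 2 * m1 * m2)"
        unfolding Fr_grid[OF n0 s] m1_def[symmetric] m2_def[symmetric] pj by (simp add: power2_eq_square)
      also have "\<dots> < 0" using m1 m2 by (simp add: power_even_eq)
      finally have "Fr n \<sigma> (2 * pi * real (j - 1) / real n) * Fr n \<sigma> (2 * pi * real j / real n) < 0" .
      from ivt0[OF ab c this] show ?thesis by blast
    qed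
  qed
  then show ?thesis by metis
qed


lemma vnorm_vec: "vnorm (vec n h) = sqrt (\<Sum>i<n. (h i)^2)"
  unfolding vnorm_def by simp

lemma sum_sq_pos: fixes h :: "nat \<Rightarrow> real" shows "i < n \<Longrightarrow> h i \<noteq> 0 \<Longrightarrow> (\<Sum>i<n. (h i)^2) > 0"
  by (intro sum_pos2[of _ i]) auto

lemma vnorm_normalized: fixes h :: "nat \<Rightarrow> real"
  assumes "i < n" "h i \<noteq> 0"
  shows "vnorm (vec n (\<lambda>i. (1 / vnorm (vec n h)) * h i)) = 1"
proof -
  define S where "S = (\<Sum>i<n. (h i)^2)"
  have S: "S > 0" unfolding S_def using sum_sq_pos assms by blast
  have "vnorm (vec n (\<lambda>i. (1 / vnorm (vec n h)) * h i)) = sqrt (\<Sum>i<n. (1 / sqrt S)^2 * (h i)^2)"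
    unfolding vnorm_vec S_def by (simp add: power_mult_distrib power_divide)
  also have "\<dots> = sqrt ((1 / sqrt S)^2 * S)" unfolding S_def sum_distrib_left ..
  also have "\<dots> = 1" using S by (simp add: power_divide)
  finally show ?thesis .
qed

lemma cos_C_nz: assumes s: "\<sigma> > 0" and x: "0 < x" "x < pi" and F: "Fr n \<sigma> x = 0"
  shows "cos (real n / 2 * x) \<noteq> 0"
proof
  assume C: "cos (real n / 2 * x) = 0"
  then have "sin (real n / 2 * x)^2 = 1" using sin_cos_squared_add[of "real n / 2 * x"] by simp
  then have S: "sin (real n / 2 * x) \<noteq> 0" by auto
  have "\<sigma> * sin (real n / 2 * x) * sin x = 0" using F C unfolding Fr_def by simp
  moreover have "sin x > 0" using sin_gt_zero x by blast
  ultimately show False using s S by simp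
qed

lemma grid_less: fixes x y :: real assumes n: "n > 0" and h: "2 * pi * x / real n < 2 * pi * y / real n"
  shows "x < y"
proof -
  have "2 * pi * x < 2 * pi * y" using h n by (simp add: divide_less_cancel)
  then show ?thesis using pi_gt_zero by simp
qed

theorem lemma3p2:
  fixes n :: nat and \<sigma> :: real
  assumes "n \<ge> 2" and "\<sigma> > 0"
  shows "\<exists>ps :: real vec list.
      length ps = n - 1 \<and>
      lin_indep_vecs n ps \<and>
      (\<forall>p\<in>set ps. vnorm p = 1 \<and> (\<exists>k>0. eigenvector (Mmat n \<sigma>) p k)) \<and>
      card {j. j < n - 1 \<and> sym_vec n (ps ! j) \<and> pc (ps ! j) n \<noteq> 0} = n div 2 \<and>
      card {j. j < n - 1 \<and> \<not> (sym_vec n (ps ! j) \<and> pc (ps ! j) n \<noteq> 0)} = (n - 1) div 2 \<and>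
      (\<forall>j<n - 1. \<not> (sym_vec n (ps ! j) \<and> pc (ps ! j) n \<noteq> 0) \<longrightarrow>
          (\<exists>m :: int. \<exists>b :: real. b \<noteq> 0 \<and>
              (\<forall>l\<in>{1..n}. pc (ps ! j) l = b * sin (real l * (2 * pi * real_of_int m / real n)))) \<and>
          antisym_vec n (ps ! j) \<and> pc (ps ! j) n = 0 \<and>
          (\<forall>\<tau>>0. \<exists>k>0. eigenvector (Mmat n \<tau>) (ps ! j) k)) \<and>
      (\<forall>p k. eigenvector (Mmat n \<sigma>) p k \<and> k < 0 \<and> vnorm p = 1 \<longrightarrow>
          sym_vec n p \<and> pc p n \<noteq> 0)"
proof -
  note n = assms(1) and s = assms(2)
  have s0: "\<sigma> \<ge> 0" using s by simp
  obtain \<phi> where \<phi>: "\<forall>j\<in>{1..n div 2}. 2 * pi * real (j - 1) / real n < \<phi> j \<and> \<phi> j < 2 * pi * real j / real n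
     \<and> Fr n \<sigma> (\<phi> j) = 0" using roots_exist[OF n s0] by blast
  define a where "a = (n - 1) div 2"
  have an: "a + n div 2 = n - 1" unfolding a_def using n by presburger
  have a2: "2 * a < n" unfolding a_def using n by presburger
  define \<theta> where "\<theta> m = 2 * pi * real m / real n" for m :: nat
  define H where "H j = (if j < a then (\<lambda>i. sin (real (i + 1) * \<theta> (j + 1)))
      else (\<lambda>i. cos ((real (i + 1) - real n / 2) * \<phi> (j - a + 1))))" for j
  have Hs: "H j = (\<lambda>i. sin (real (i + 1) * \<theta> (j + 1)))" if "j < a" for j
    unfolding H_def using that by simp
  have Hc: "H j = (\<lambda>i. cos ((real (i + 1) - real n / 2) * \<phi> (j - a + 1)))" if "\<not> j < a" for j
    unfolding H_def using that by simp
  define xk where "xk j = (if j < a then \<theta> (j + 1) else \<phi> (j - a + 1))" for j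
  define mu where "mu x = 1 + 2 * \<sigma> - 2 * \<sigma> * cos x" for x
  define kk where "kk j = 1 / mu (xk j)" for j
  define nz where "nz j = vec n (\<lambda>i. (1 / vnorm (vec n (H j))) * H j i)" for j
  define ps where "ps = map nz [0..<n - 1]"
  have n0: "n > 0" using n by simp
  have mu1: "mu x \<ge> 1" for x unfolding mu_def using mu_pos[OF s0] .
  have \<phi>t: "0 < \<phi> (j - a + 1) \<and> \<phi> (j - a + 1) < pi \<and> Fr n \<sigma> (\<phi> (j - a + 1)) = 0"
    if "a \<le> j" "j < n - 1" for j
  proof -
    define t where "t = j - a + 1"
    have t: "t \<in> {1..n div 2}" unfolding t_def using that an by auto
    from \<phi> t have h: "2 * pi * real (t - 1) / real n < \<phi> t" "\<phi> t < 2 * pi * real t / real n" "Fr n \<sigma> (\<phi> t) = 0"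
      by auto
    have "0 \<le> 2 * pi * real (t - 1) / real n" by simp
    moreover have "2 * pi * real t / real n \<le> pi"
    proof -
      have "t \<le> n div 2" using t by simp
      then have "2 * t \<le> n" by presburger
      then have "real (2 * t) \<le> real n" by (simp only: of_nat_le_iff)
      then have "2 * real t \<le> real n" by simp
      then have "pi * (2 * real t) \<le> pi * real n" using pi_gt_zero by (intro mult_left_mono) auto
      then have "2 * pi * real t \<le> pi * real n" by (simp add: mult_ac)
      then show ?thesis using n0 by (simp add: divide_le_eq)
    qed
    ultimately show ?thesis using h unfolding t_def by linarith
  qed
  have \<theta>t: "0 < \<theta> (j + 1) \<and> \<theta> (j + 1) < pi" if "j < a" for j
  proof -
    have "2 * (j + 1) < n" using that a2 by presburger
    then have "real (2 * (j + 1)) < real n" by (simp only: of_nat_less_iff)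
    then have "2 * real (j + 1) < real n" by simp
    then have "pi * (2 * real (j + 1)) < pi * real n" using pi_gt_zero by (intro mult_strict_left_mono) auto
    then have "2 * pi * real (j + 1) < pi * real n" by (simp add: mult_ac)
    then show ?thesis unfolding \<theta>_def using n0 by (simp add: divide_less_eq)
  qed
  have xk_range: "0 < xk j \<and> xk j < pi" if "j < n - 1" for j
    using \<phi>t[of j] \<theta>t[of j] that unfolding xk_def by (cases "j < a") auto
  have xk_inj: "xk j \<noteq> xk j'" if "j < n - 1" "j' < n - 1" "j \<noteq> j'" for j j'
  proof -
    have main: "xk j \<noteq> xk j'" if "j < n - 1" "j' < n - 1" "j < j'" for j j'
    proof (cases "j' < a")
      case True
      then have "j < a" using that by simp
      have "\<theta> (j + 1) < \<theta> (j' + 1)" unfolding \<theta>_def using that n0 pi_gt_zero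
        by (intro divide_strict_right_mono mult_strict_left_mono) auto
      then show ?thesis unfolding xk_def using True \<open>j < a\<close> by simp
    next
      case j'a: False
      define t' where "t' = j' - a + 1"
      have t': "t' \<in> {1..n div 2}" unfolding t'_def using that(2) j'a an by simp
      have h': "2 * pi * real (t' - 1) / real n < \<phi> t'" "\<phi> t' < 2 * pi * real t' / real n"
        using bspec[OF \<phi> t'] by blast+
      show ?thesis
      proof (cases "j < a")
        case True
        have "\<theta> (j + 1) \<noteq> \<phi> t'"
        proof
          assume eq: "\<theta> (j + 1) = \<phi> t'"
          have "2 * pi * real (t' - 1) / real n < 2 * pi * real (j + 1) / real n"
            using h'(1) eq unfolding \<theta>_def by simp
          from grid_less[OF n0 this] have "real (t' - 1) < real (j + 1)" .
          moreover have "2 * pi * real (j + 1) / real n < 2 * pi * real t' / real n"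
            using h'(2) eq unfolding \<theta>_def by simp
          from grid_less[OF n0 this] have "real (j + 1) < real t'" .
          ultimately show False unfolding of_nat_less_iff by linarith
        qed
        then show ?thesis unfolding xk_def t'_def using True j'a by simp
      next
        case False
        define t where "t = j - a + 1"
        have t: "t \<in> {1..n div 2}" unfolding t_def using that False an by auto
        from \<phi> t have h: "\<phi> t < 2 * pi * real t / real n" by auto
        have tt: "t \<le> t' - 1" unfolding t_def t'_def using that False by simp
        have "2 * pi * real t / real n \<le> 2 * pi * real (t' - 1) / real n"
          using tt n0 by (simp add: divide_right_mono)
        then have "\<phi> t < \<phi> t'" using h h'(1) by linarith
        then show ?thesis unfolding xk_def t_def t'_def using False j'a by simp
      qed
    qed
    show ?thesis using that main[of j j'] main[of j' j] by (cases "j < j'") auto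
  qed
  have kk_inj: "kk j \<noteq> kk j'" if "j < n - 1" "j' < n - 1" "j \<noteq> j'" for j j'
  proof
    assume "kk j = kk j'"
    then have "1 / (1 / mu (xk j)) = 1 / (1 / mu (xk j'))" unfolding kk_def by simp
    then have "mu (xk j) = mu (xk j')" by simp
    then have "cos (xk j) = cos (xk j')" unfolding mu_def using s by simp
    moreover have "0 \<le> xk j" "xk j \<le> pi" "0 \<le> xk j'" "xk j' \<le> pi"
      using xk_range[OF that(1)] xk_range[OF that(2)] by auto
    ultimately have "xk j = xk j'" using cos_inj_pi by blast
    with xk_inj[OF that] show False ..
  qed
  have kk_pos: "kk j > 0" for j unfolding kk_def using mu1[of "xk j"] by simp
  have Heig: "\<forall>i<n. Bf n (H j) i = kk j * Af n \<sigma> (H j) i" if "j < n - 1" for j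
  proof (intro allI impI)
    fix i assume i: "i < n"
    show "Bf n (H j) i = kk j * Af n \<sigma> (H j) i"
    proof (cases "j < a")
      case True
      have e1: "Af n \<sigma> (H j) i = mu (xk j) * H j i" "Bf n (H j) i = H j i"
        unfolding Hs[OF True] xk_def mu_def \<theta>_def if_P[OF True]
        by (rule sine_eig(1)[OF n i], rule sine_eig(2)[OF n i])
      show ?thesis unfolding e1 kk_def using mu1[of "xk j"] by simp
    next
      case False
      have F: "\<sigma> * sin (real n / 2 * xk j) * sin (xk j) = cos (real n / 2 * xk j) * (1 + 2 * \<sigma> - 2 * \<sigma> * cos (xk j))"
        using \<phi>t[of j] False that unfolding xk_def Fr_def by simp
      have e1: "Af n \<sigma> (H j) i = mu (xk j) * Bf n (H j) i"
        using cos_eig[OF n i F] False unfolding H_def xk_def mu_def by simp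
      show ?thesis unfolding e1 kk_def using mu1[of "xk j"] by simp
    qed
  qed
  have Hnz: "\<exists>i<n. H j i \<noteq> 0" if "j < n - 1" for j
  proof (cases "j < a")
    case True
    have "sin (\<theta> (j + 1)) > 0" using \<theta>t[OF True] sin_gt_zero by blast
    then have "H j 0 \<noteq> 0" unfolding H_def using True by simp
    then show ?thesis using n0 by blast
  next
    case False
    have "cos (real n / 2 * \<phi> (j - a + 1)) \<noteq> 0"
      using cos_C_nz[OF s] \<phi>t[of j] False that by auto
    moreover have "(real (n - 1 + 1) - real n / 2) = real n / 2" using n0 by simp
    ultimately have "H j (n - 1) \<noteq> 0" unfolding H_def using False by (simp add: mult.commute)
    then show ?thesis using n0 by (intro exI[of _ "n - 1"]) simp
  qed
  define V where "V j = vnorm (vec n (H j))" for j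
  have Vpos: "V j > 0" if jj: "j < n - 1" for j
  proof -
    obtain i where "i < n" "H j i \<noteq> 0" using Hnz[OF jj] by blast
    then show ?thesis unfolding V_def vnorm_vec using sum_sq_pos[of i n "H j"] by simp
  qed
  have nz_idx: "nz j $ i = (1 / V j) * H j i" if "i < n" for i j
    unfolding nz_def V_def using that by simp
  have nz_eig: "eigenvector (Mmat n \<sigma>) (nz j) (kk j)" if jj: "j < n - 1" for j
  proof -
    obtain i where i: "i < n" "H j i \<noteq> 0" using Hnz[OF jj] by blast
    show ?thesis unfolding nz_def
    proof (rule eig_vec_fun[OF s0 _ i(1)])
      show "\<forall>i<n. Bf n (\<lambda>i. 1 / vnorm (vec n (H j)) * H j i) i = kk j * Af n \<sigma> (\<lambda>i. 1 / vnorm (vec n (H j)) * H j i) i"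
        unfolding Bf_smult Af_smult using Heig[OF that] by simp
      show "1 / vnorm (vec n (H j)) * H j i \<noteq> 0" using Vpos[OF that] i(2) unfolding V_def by simp
    qed
  qed
  have nz_norm: "vnorm (nz j) = 1" if jj: "j < n - 1" for j
  proof -
    obtain i where i: "i < n" "H j i \<noteq> 0" using Hnz[OF jj] by blast
    show ?thesis unfolding nz_def by (rule vnorm_normalized[of i n "H j", OF i])
  qed
  have ps_nth: "ps ! j = nz j" if "j < n - 1" for j unfolding ps_def using that by simp
  have len: "length ps = n - 1" unfolding ps_def by simp
  have pc_nz: "pc (nz j) l = (1 / V j) * H j (l - 1)" if "l \<in> {1..n}" for j l
  proof -
    have "l - 1 < n" using that by auto
    then show ?thesis unfolding pc_def by (rule nz_idx)
  qed
  have sinpart: "(\<exists>m :: int. \<exists>b :: real. b \<noteq> 0 \<and>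
              (\<forall>l\<in>{1..n}. pc (nz j) l = b * sin (real l * (2 * pi * real_of_int m / real n)))) \<and>
          antisym_vec n (nz j) \<and> pc (nz j) n = 0 \<and>
          (\<forall>\<tau>>0. \<exists>k>0. eigenvector (Mmat n \<tau>) (nz j) k)" if "j < a" for j
  proof -
    have j1: "j < n - 1" using that an by simp
    have b: "1 / V j \<noteq> 0" using Vpos[OF j1] by simp
    have pcl: "pc (nz j) l = (1 / V j) * sin (real l * \<theta> (j + 1))" if "l \<in> {1..n}" for l
      unfolding pc_nz[OF that] H_def using \<open>j < a\<close> that by simp
    have ex: "\<exists>m :: int. \<exists>b :: real. b \<noteq> 0 \<and>
              (\<forall>l\<in>{1..n}. pc (nz j) l = b * sin (real l * (2 * pi * real_of_int m / real n)))"
      by (rule exI[of _ "int (j + 1)"], rule exI[of _ "1 / V j"]) (use b pcl in \<open>simp add: \<theta>_def\<close>)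
    have sn: "sin (real n * \<theta> (j + 1)) = 0" and cn: "cos (real n * \<theta> (j + 1)) = 1"
      using sin_cos_nth[OF n0, of "j + 1"] unfolding \<theta>_def by auto
    have anti: "antisym_vec n (nz j)" unfolding antisym_vec_def
    proof
      fix l assume l: "l \<in> {1..n - 1}"
      then have l1: "l \<in> {1..n}" "n - l \<in> {1..n}" and ln: "l \<le> n" by auto
      have "real (n - l) * \<theta> (j + 1) = real n * \<theta> (j + 1) - real l * \<theta> (j + 1)"
        using ln by (simp add: of_nat_diff algebra_simps)
      then have "sin (real (n - l) * \<theta> (j + 1)) = - sin (real l * \<theta> (j + 1))"
        using sn cn by (simp add: sin_diff)
      then show "pc (nz j) l = - pc (nz j) (n - l)" unfolding pcl[OF l1(1)] pcl[OF l1(2)] by simp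
    qed
    have pcn: "pc (nz j) n = 0" using pcl[of n] n0 sn by simp
    have tau: "\<exists>k>0. eigenvector (Mmat n \<tau>) (nz j) k" if "\<tau> > 0" for \<tau>
    proof -
      define m where "m = 1 + 2 * \<tau> - 2 * \<tau> * cos (\<theta> (j + 1))"
      have m1: "m \<ge> 1" unfolding m_def using mu_pos[of \<tau>] that by simp
      have "eigenvector (Mmat n \<tau>) (nz j) (1 / m)" unfolding nz_def
      proof (rule eig_vec_fun[of \<tau> n _ _ 0])
        show "0 \<le> \<tau>" using that by simp
        show "\<forall>i<n. Bf n (\<lambda>i. 1 / vnorm (vec n (H j)) * H j i) i = 1 / m * Af n \<tau> (\<lambda>i. 1 / vnorm (vec n (H j)) * H j i) i"
        proof (intro allI impI)
          fix i assume i: "i < n"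
          have e1: "Af n \<tau> (H j) i = m * H j i" "Bf n (H j) i = H j i"
            unfolding Hs[OF \<open>j < a\<close>] m_def \<theta>_def
            by (rule sine_eig(1)[OF n i], rule sine_eig(2)[OF n i])
          show "Bf n (\<lambda>i. 1 / vnorm (vec n (H j)) * H j i) i = 1 / m * Af n \<tau> (\<lambda>i. 1 / vnorm (vec n (H j)) * H j i) i"
            unfolding Bf_smult Af_smult e1 using m1 by simp
        qed
        show "0 < n" by (rule n0)
        have "sin (\<theta> (j + 1)) > 0" using \<theta>t[OF \<open>j < a\<close>] sin_gt_zero by blast
        then show "1 / vnorm (vec n (H j)) * H j 0 \<noteq> 0" using Vpos[OF j1] \<open>j < a\<close> unfolding V_def H_def by simp
      qed
      moreover have "1 / m > 0" using m1 by simp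
      ultimately show ?thesis by blast
    qed
    show ?thesis using ex anti pcn tau by blast
  qed
  have cospart: "sym_vec n (nz j) \<and> pc (nz j) n \<noteq> 0" if "a \<le> j" "j < n - 1" for j
  proof -
    have pcl: "pc (nz j) l = (1 / V j) * cos ((real l - real n / 2) * \<phi> (j - a + 1))" if "l \<in> {1..n}" for l
      unfolding pc_nz[OF that] H_def using \<open>a \<le> j\<close> that by simp
    have sym: "sym_vec n (nz j)" unfolding sym_vec_def
    proof
      fix l assume l: "l \<in> {1..n - 1}"
      then have l1: "l \<in> {1..n}" "n - l \<in> {1..n}" and ln: "l \<le> n" by auto
      have "(real (n - l) - real n / 2) * \<phi> (j - a + 1) = - ((real l - real n / 2) * \<phi> (j - a + 1))"
        using ln by (simp add: of_nat_diff algebra_simps)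
      then have "cos ((real (n - l) - real n / 2) * \<phi> (j - a + 1)) = cos ((real l - real n / 2) * \<phi> (j - a + 1))"
        by (simp only: cos_minus)
      then show "pc (nz j) l = pc (nz j) (n - l)" unfolding pcl[OF l1(1)] pcl[OF l1(2)] by simp
    qed
    have "cos (real n / 2 * \<phi> (j - a + 1)) \<noteq> 0"
      using cos_C_nz[OF s] \<phi>t[OF that] by auto
    then have "pc (nz j) n \<noteq> 0" using pcl[of n] n0 Vpos[OF that(2)] by (simp add: mult.commute)
    with sym show ?thesis by simp
  qed
  have classify: "(sym_vec n (ps ! j) \<and> pc (ps ! j) n \<noteq> 0) \<longleftrightarrow> \<not> j < a" if "j < n - 1" for j
    using sinpart[of j] cospart[of j] that ps_nth[OF that] by (cases "j < a") auto
  have set1: "{j. j < n - 1 \<and> sym_vec n (ps ! j) \<and> pc (ps ! j) n \<noteq> 0} = {a..<n - 1}"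
  proof (rule Set.set_eqI)
    fix j show "j \<in> {j. j < n - 1 \<and> sym_vec n (ps ! j) \<and> pc (ps ! j) n \<noteq> 0} \<longleftrightarrow> j \<in> {a..<n - 1}"
      using classify[of j] by auto
  qed
  have set2: "{j. j < n - 1 \<and> \<not> (sym_vec n (ps ! j) \<and> pc (ps ! j) n \<noteq> 0)} = {..<a}"
  proof (rule Set.set_eqI)
    fix j show "j \<in> {j. j < n - 1 \<and> \<not> (sym_vec n (ps ! j) \<and> pc (ps ! j) n \<noteq> 0)} \<longleftrightarrow> j \<in> {..<a}"
      using classify[of j] an by auto
  qed
  have li: "lin_indep_vecs n ps"
  proof (rule lin_indep_eig[OF s0, where kk=kk])
    show "\<forall>j<length ps. ps ! j \<in> carrier_vec n" unfolding len using ps_nth nz_def by simp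
    show "\<forall>j<length ps. \<exists>i<n. ps ! j $ i \<noteq> 0"
    proof (intro allI impI)
      fix j assume j: "j < length ps"
      obtain i where i: "i < n" "H j i \<noteq> 0" using Hnz j len by auto
      have jj: "j < n - 1" using j len by simp
      have "ps ! j $ i = (1 / V j) * H j i" using ps_nth[OF jj] nz_idx[OF i(1)] by simp
      then have "ps ! j $ i \<noteq> 0" using Vpos[OF jj] i(2) by simp
      then show "\<exists>i<n. ps ! j $ i \<noteq> 0" using i(1) by blast
    qed
    show "\<forall>j<length ps. \<forall>i<n. Bf n (($) (ps ! j)) i = kk j * Af n \<sigma> (($) (ps ! j)) i"
      using nz_eig ps_nth len unfolding eig_iff[OF s0] by auto
    show "\<forall>j j'. j < length ps \<and> j' < length ps \<and> j \<noteq> j' \<longrightarrow> kk j \<noteq> kk j'"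
      using kk_inj len by auto
  qed
  have allp: "\<forall>p\<in>set ps. vnorm p = 1 \<and> (\<exists>k>0. eigenvector (Mmat n \<sigma>) p k)"
  proof
    fix p assume "p \<in> set ps"
    then obtain j where j: "j < n - 1" "p = nz j" unfolding ps_def by auto
    then show "vnorm p = 1 \<and> (\<exists>k>0. eigenvector (Mmat n \<sigma>) p k)"
      using nz_norm nz_eig kk_pos by blast
  qed
  have negp: "\<forall>p k. eigenvector (Mmat n \<sigma>) p k \<and> k < 0 \<and> vnorm p = 1 \<longrightarrow>
          sym_vec n p \<and> pc p n \<noteq> 0"
  proof (intro allI impI)
    fix p k assume h: "eigenvector (Mmat n \<sigma>) p k \<and> k < 0 \<and> vnorm p = 1"
    have r: "\<forall>i<n. p $ i = p $ (rf n i)" and pn: "p $ (n - 1) \<noteq> 0"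
      using neg_eig[OF n s0 _ ] h by blast+
    have "sym_vec n p" unfolding sym_vec_def pc_def
    proof
      fix l assume l: "l \<in> {1..n - 1}"
      then have "rf n (l - 1) = n - l - 1" unfolding rf_def by auto
      then show "p $ (l - 1) = p $ (n - l - 1)" using r l by (metis atLeastAtMost_iff diff_less le_trans less_one not_le n0 diff_le_self)
    qed
    then show "sym_vec n p \<and> pc p n \<noteq> 0" using pn unfolding pc_def by simp
  qed
  show ?thesis
    apply (rule exI[of _ ps])
    apply (intro conjI)
    subgoal by (rule len)
    subgoal by (rule li)
    subgoal by (rule allp)
    subgoal unfolding set1 using an by simp
    subgoal unfolding set2 a_def by simp
    subgoal using sinpart classify ps_nth by auto
    subgoal by (rule negp)
    done
qed

end
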